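(* Let $\mathbb{K}$ be a field of characteristic not $2$, $E$ an $n$-dimensional $\mathbb{K}$-vector space with $n\geq 2$, and $\mathcal{V}$ a linear subspace of $\mathcal{L}(E)$ such that every $u\in\mathcal{V}$ has at most two distinct eigenvalues in $\mathbb{K}$; if $n=2$, assume moreover that every $u\in\mathcal{V}$ has at most one nonzero eigenvalue in $\mathbb{K}$. Then for every $2$-complex $(E_1,\dots,E_n)$ of $E$, there exists a $\mathcal{V}$-good vector not belonging to $E_1\cup\cdots\cup E_n$.
   Context: A $2$-complex of $E$ is an $n$-tuple $(E_i)_{1\leq i\leq n}$ of linear subspaces of $E$ with $\dim E_i=\lfloor (i+1)/2\rfloor$ for all $i$. A nonzero vector $x\in E$ is $\mathcal{V}$-good if there is no $u\in\mathcal{V}$ with $\operatorname{im}u=\mathbb{K}x$ and $\operatorname{tr}(u)=0$. *)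

theory Defs
  imports "HOL-Analysis.Analysis"
begin

text \<open>E = K^n is modelled as 'a^'n (n = CARD('n)); L(E) as n x n matrices 'a^'n^'n acting by *v.\<close>

definition mat_scale :: "'a::field \<Rightarrow> 'a^'n^'n \<Rightarrow> 'a^'n^'n" where
  "mat_scale c M = (\<chi> i j. c * M $ i $ j)"

definition linear_subspace_mat :: "('a::field^'n^'n) set \<Rightarrow> bool" where
  "linear_subspace_mat V \<longleftrightarrow> 0 \<in> V \<and> (\<forall>A\<in>V. \<forall>B\<in>V. A + B \<in> V) \<and> (\<forall>c. \<forall>A\<in>V. mat_scale c A \<in> V)"

definition is_eigenvalue :: "'a::field^'n^'n \<Rightarrow> 'a \<Rightarrow> bool" where
  "is_eigenvalue u c \<longleftrightarrow> (\<exists>x. x \<noteq> 0 \<and> u *v x = c *s x)"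

definition two_complex :: "(nat \<Rightarrow> ('a::field^'n) set) \<Rightarrow> bool" where
  "two_complex Es \<longleftrightarrow> (\<forall>i\<in>{1..CARD('n)}. vec.subspace (Es i) \<and> vec.dim (Es i) = (i + 1) div 2)"

definition V_good :: "('a::field^'n^'n) set \<Rightarrow> 'a^'n \<Rightarrow> bool" where
  "V_good V x \<longleftrightarrow> x \<noteq> 0 \<and> \<not> (\<exists>u\<in>V. range ((*v) u) = vec.span {x} \<and> trace u = 0)"

end

theory Submission
  imports Defs
begin

definition dotp :: "'a::field^'n \<Rightarrow> 'a^'n \<Rightarrow> 'a" where
  "dotp f z = (\<Sum>j\<in>UNIV. f$j * z$j)"

definition outer :: "'a::field^'n \<Rightarrow> 'a^'n \<Rightarrow> 'a^'n^'n" where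
  "outer x f = (\<chi> i j. x$i * f$j)"

lemma outer_mult: "outer x f *v z = dotp f z *s x"
  by (simp add: outer_def dotp_def matrix_vector_mult_def vec_eq_iff sum_distrib_left mult_ac)

lemma trace_outer: "trace (outer x f) = dotp f x"
  by (simp add: outer_def dotp_def trace_def mult_ac)

lemma mult_axis: "((u::'a::field^'n^'n) *v axis j 1) $ i = u$i$j"
  by (simp add: matrix_vector_mult_def axis_def if_distrib sum.If_cases cong del: if_weak_cong)

lemma dotp_add: "dotp f (y + z) = dotp f y + dotp f z"
  by (simp add: dotp_def sum.distrib algebra_simps)
lemma dotp_diff: "dotp f (y - z) = dotp f y - dotp f z"
  by (simp add: dotp_def sum_subtractf algebra_simps)
lemma dotp_scale: "dotp f (c *s z) = c * dotp f z"
  by (simp add: dotp_def sum_distrib_left mult_ac)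

lemma bad_decomp:
  fixes V :: "('a::field^'n^'n) set" and x :: "'a^'n"
  assumes "x \<noteq> 0" "\<not> V_good V x"
  shows "\<exists>f. outer x f \<in> V \<and> dotp f x = 0 \<and> f \<noteq> 0"
proof -
  from assms obtain u where u: "u \<in> V" "range ((*v) u) = vec.span {x}" "trace u = 0"
    unfolding V_good_def by blast
  have "\<forall>j. \<exists>c. u *v axis j 1 = c *s x"
  proof
    fix j
    have "u *v axis j 1 \<in> vec.span {x}" using u(2) by blast
    then show "\<exists>c. u *v axis j 1 = c *s x" by (auto simp: vec.span_singleton)
  qed
  then obtain c where c: "\<And>j. u *v axis j 1 = c j *s x" by metis
  define f where "f = (\<chi> j. c j)"
  have uf: "u = outer x f"
  proof -
    have "u$i$j = outer x f $i$j" for i j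
      using arg_cong[OF c[of j], of "\<lambda>v. v$i"] by (simp add: mult_axis outer_def f_def mult_ac)
    then show ?thesis by (simp add: vec_eq_iff)
  qed
  have "f \<noteq> 0"
  proof
    assume "f = 0"
    then have "range ((*v) u) = {0}" by (auto simp: uf outer_mult dotp_def)
    moreover have "x \<in> vec.span {x}" by (simp add: vec.span_base)
    ultimately show False using u(2) assms(1) by auto
  qed
  then show ?thesis using u uf trace_outer by metis
qed

lemma mat_scale_mult: "mat_scale c A *v z = c *s (A *v z)"
  by (simp add: mat_scale_def matrix_vector_mult_def vec_eq_iff sum_distrib_left mult_ac)

lemma indep_comb:
  fixes x y :: "'a::field^'n"
  assumes "\<forall>c. y \<noteq> c *s x" "\<beta> \<noteq> 0"
  shows "\<alpha> *s x + \<beta> *s y \<noteq> 0"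
proof
  assume "\<alpha> *s x + \<beta> *s y = 0"
  then have "\<beta> *s y = (- \<alpha>) *s x" by (simp add: eq_neg_iff_add_eq_0 add.commute)
  then have "(inverse \<beta>) *s (\<beta> *s y) = (inverse \<beta>) *s ((- \<alpha>) *s x)" by simp
  then have "y = (inverse \<beta> * (- \<alpha>)) *s x" using assms(2) by (simp add: vector_smult_assoc)
  then show False using assms(1) by blast
qed

lemma indep_comb2:
  fixes x y :: "'a::field^'n"
  assumes "\<forall>c. y \<noteq> c *s x" "\<beta> \<noteq> 0"
  shows "\<alpha> *s x - \<beta> *s y \<noteq> 0"
proof
  assume "\<alpha> *s x - \<beta> *s y = 0"
  then have "\<alpha> *s x = \<beta> *s y" by (simp only: right_minus_eq)
  then have "\<beta> *s y = \<alpha> *s x" by (rule sym)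
  then have "(inverse \<beta>) *s (\<beta> *s y) = (inverse \<beta>) *s (\<alpha> *s x)" by simp
  then have "y = (inverse \<beta> * \<alpha>) *s x" using assms(2) by (simp add: vector_smult_assoc)
  then show False using assms(1) by blast
qed

lemma kernel_vec:
  fixes f g :: "'a::field^'n"
  assumes "CARD('n) \<ge> 3"
  shows "\<exists>z. z \<noteq> 0 \<and> dotp f z = 0 \<and> dotp g z = 0"
proof (rule ccontr)
  assume H: "\<not> ?thesis"
  define M :: "'a^'n^2" where "M = (\<chi> i. if i = 0 then f else g)"
  have Mz: "(M *v z) $ i = (if i = 0 then dotp f z else dotp g z)" for z i
    by (simp add: M_def matrix_vector_mult_def dotp_def)
  have "inj_on ((*v) M) (vec.span UNIV)"
  proof (rule inj_onI)
    fix a b assume "M *v a = M *v b"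
    then have "M *v (a - b) = 0" by (simp add: matrix_vector_mult_diff_distrib)
    then have "dotp f (a - b) = 0 \<and> dotp g (a - b) = 0"
      using Mz[of "a - b" 0] Mz[of "a - b" 1] by (simp add: vec_eq_iff)
    with H have "a - b = 0" by blast
    then show "a = b" by simp
  qed
  then have "vec.dim (range ((*v) M)) = vec.dim (UNIV :: ('a^'n) set)"
    by (intro vec.dim_image_eq) auto
  moreover have "vec.dim (range ((*v) M)) \<le> CARD(2)" by (rule dim_subset_UNIV_cart_gen)
  ultimately show False using assms by (simp add: vec_dim_card card_cart_basis)
qed

lemma eigI: "x \<noteq> 0 \<Longrightarrow> u *v x = c *s x \<Longrightarrow> is_eigenvalue u c"
  unfolding is_eigenvalue_def by blast

lemma pair_lemma:
  fixes V :: "('a::field^'n^'n) set"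
  assumes char: "(2::'a) \<noteq> 0"
    and n2: "CARD('n) \<ge> 2"
    and V: "linear_subspace_mat V"
    and two_eig: "\<forall>u\<in>V. finite {c. is_eigenvalue u c} \<and> card {c. is_eigenvalue u c} \<le> 2"
    and n_eq_2: "CARD('n) = 2 \<Longrightarrow>
       (\<forall>u\<in>V. finite {c. c \<noteq> 0 \<and> is_eigenvalue u c} \<and> card {c. c \<noteq> 0 \<and> is_eigenvalue u c} \<le> 1)"
    and xf: "outer x f \<in> V" "dotp f x = 0"
    and yg: "outer y g \<in> V" "dotp g y = 0"
    and xy: "\<forall>c. y \<noteq> c *s x"
  shows "dotp f y * dotp g x = 0"
proof (rule ccontr)
  assume ne: "dotp f y * dotp g x \<noteq> 0"
  define a where "a = dotp f y"
  define b where "b = dotp g x"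
  define s where "s = a * b"
  have s0: "s \<noteq> 0" and b0: "b \<noteq> 0" using ne by (auto simp: a_def b_def s_def)
  define w where "w = mat_scale s (outer x f) + outer y g"
  have wV: "w \<in> V" using V xf yg unfolding w_def linear_subspace_mat_def by blast
  have wz: "w *v z = (s * dotp f z) *s x + dotp g z *s y" for z
    by (simp add: w_def matrix_vector_mult_add_rdistrib mat_scale_mult outer_mult vector_smult_assoc)
  have d1: "dotp f (s *s x + b *s y) = s" using xf(2)
    by (simp add: dotp_add dotp_scale s_def a_def[symmetric] mult.commute)
  have d2: "dotp g (s *s x + b *s y) = s * b" using yg(2)
    by (simp add: dotp_add dotp_scale s_def b_def[symmetric])
  have "w *v (s *s x + b *s y) = s *s (s *s x + b *s y)"
  proof -
    have "w *v (s *s x + b *s y) = (s * s) *s x + (s * b) *s y" by (simp only: wz d1 d2)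
    also have "\<dots> = s *s (s *s x + b *s y)" by (simp add: vec_eq_iff ring_distribs mult_ac)
    finally show ?thesis .
  qed
  moreover have "s *s x + b *s y \<noteq> 0" using indep_comb[OF xy b0] .
  ultimately have e1: "is_eigenvalue w s" by (intro eigI)
  have d3: "dotp f (s *s x - b *s y) = - s" using xf(2)
    by (simp add: dotp_diff dotp_scale s_def a_def[symmetric] mult.commute)
  have d4: "dotp g (s *s x - b *s y) = s * b" using yg(2)
    by (simp add: dotp_diff dotp_scale s_def b_def[symmetric])
  have "w *v (s *s x - b *s y) = (-s) *s (s *s x - b *s y)"
  proof -
    have "w *v (s *s x - b *s y) = (s * - s) *s x + (s * b) *s y" by (simp only: wz d3 d4)
    also have "\<dots> = (-s) *s (s *s x - b *s y)" by (simp add: vec_eq_iff ring_distribs mult_ac)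
    finally show ?thesis .
  qed
  moreover have "s *s x - b *s y \<noteq> 0" using indep_comb2[OF xy b0, of s] .
  ultimately have e2: "is_eigenvalue w (-s)" using eigI by blast
  have sns: "s \<noteq> - s"
  proof
    assume "s = - s"
    then have "s + s = 0" by (metis add.right_inverse)
    then have "2 * s = 0" by (simp only: mult_2)
    then show False using char s0 by simp
  qed
  define t where "t = - s"
  have st: "s \<noteq> t" using sns unfolding t_def .
  have t0: "t \<noteq> 0" using s0 unfolding t_def by simp
  have e2': "is_eigenvalue w t" using e2 unfolding t_def .
  have c2: "card {s, t} = 2" using st by simp
  show False
  proof (cases "CARD('n) = 2")
    case True
    from n_eq_2[OF True] wV have fin: "finite {c. c \<noteq> 0 \<and> is_eigenvalue w c}"
      and cd: "card {c. c \<noteq> 0 \<and> is_eigenvalue w c} \<le> 1" by auto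
    have "{s, t} \<subseteq> {c. c \<noteq> 0 \<and> is_eigenvalue w c}" using e1 e2' s0 t0 by blast
    from card_mono[OF fin this] have "card {s, t} \<le> 1" using cd by linarith
    with c2 show False by linarith
  next
    case False
    then have "CARD('n) \<ge> 3" using n2 by linarith
    from kernel_vec[OF this, of f g] obtain z where z: "z \<noteq> 0" "dotp f z = 0" "dotp g z = 0" by blast
    have "w *v z = 0 *s z" using z by (simp add: wz)
    with z have e0: "is_eigenvalue w 0" using eigI by blast
    from two_eig wV have fin: "finite {c. is_eigenvalue w c}"
      and cd: "card {c. is_eigenvalue w c} \<le> 2" by auto
    have "{0, s, t} \<subseteq> {c. is_eigenvalue w c}" using e0 e1 e2' by blast
    from card_mono[OF fin this] have "card {0, s, t} \<le> 2" using cd by linarith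
    moreover have "card {0, s, t} = 3" using st s0 t0 by simp
    ultimately show False by linarith
  qed
qed

lemma avoid_subspaces:
  assumes inf: "infinite (UNIV :: 'a::field set)"
    and fin: "finite F"
  shows "(\<forall>U\<in>F. vec.subspace U \<and> U \<noteq> (UNIV :: ('a^'n) set)) \<Longrightarrow> \<exists>x. \<forall>U\<in>F. x \<notin> U"
  using fin
proof (induction F rule: finite_induct)
  case empty
  then show ?case by simp
next
  case (insert U F)
  have pU: "vec.subspace U" "U \<noteq> UNIV" and pF: "\<forall>W\<in>F. vec.subspace W \<and> W \<noteq> UNIV"
    using insert.prems by simp_all
  obtain x where x: "\<forall>W\<in>F. x \<notin> W" using insert.IH[OF pF] by blast
  show ?case
  proof (cases "x \<in> U")
    case False
    then have "\<forall>W\<in>insert U F. x \<notin> W" using x by blast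
    then show ?thesis by (rule exI)
  next
    case True
    from pU(2) obtain y where y: "y \<notin> U" by blast
    have sub: "\<forall>W\<in>F. vec.subspace W" using pF by blast
    define T where "T = (\<Union>W\<in>F. {t. y + t *s x \<in> W})"
    have fT: "finite T"
      unfolding T_def
    proof (intro finite_UN_I[OF insert.hyps(1)])
      fix W assume W: "W \<in> F"
      show "finite {t. y + t *s x \<in> W}"
      proof (cases "{t. y + t *s x \<in> W} = {}")
        case True then show ?thesis by simp
      next
        case False
        then obtain t0 where t0: "y + t0 *s x \<in> W" by auto
        have "{t. y + t *s x \<in> W} \<subseteq> {t0}"
        proof
          fix t assume t: "t \<in> {t. y + t *s x \<in> W}"
          have "(y + t *s x) - (y + t0 *s x) \<in> W"
            using t t0 sub W vec.subspace_diff by blast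
          moreover have "(y + t *s x) - (y + t0 *s x) = (t - t0) *s x"
            by (simp add: vec.scale_left_diff_distrib)
          ultimately have d: "(t - t0) *s x \<in> W" by simp
          show "t \<in> {t0}"
          proof (rule ccontr)
            assume "t \<notin> {t0}"
            then have "t - t0 \<noteq> 0" by simp
            then have i1: "inverse (t - t0) * (t - t0) = 1" by simp
            have "x = inverse (t - t0) *s ((t - t0) *s x)" by (simp only: vector_smult_assoc i1 vector_smult_lid)
            also have "\<dots> \<in> W" using d sub W vec.subspace_scale by blast
            finally show False using x W by blast
          qed
        qed
        then show ?thesis using finite_subset by blast
      qed
    qed
    then obtain t where t: "t \<notin> T" using ex_new_if_finite[OF inf] by blast
    have "y + t *s x \<notin> U"
    proof
      assume "y + t *s x \<in> U"
      moreover have "t *s x \<in> U" using True pU vec.subspace_scale by blast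
      ultimately have "(y + t *s x) - t *s x \<in> U" using pU vec.subspace_diff by blast
      then show False using y by simp
    qed
    moreover have "\<forall>W\<in>F. y + t *s x \<notin> W" using t unfolding T_def by blast
    ultimately have "\<forall>W\<in>insert U F. y + t *s x \<notin> W" by blast
    then show ?thesis by (rule exI)
  qed
qed

lemma card_subspace_le:
  fixes U :: "('a::field^'n) set"
  assumes fa: "finite (UNIV :: 'a set)" and "vec.subspace U"
  shows "card U \<le> CARD('a) ^ vec.dim U"
proof -
  obtain B where B: "B \<subseteq> U" "vec.independent B" "U \<subseteq> vec.span B" "card B = vec.dim U"
    using vec.basis_exists[of U] by blast
  have fB: "finite B" using B(2) vec.finiteI_independent by blast
  have "vec.span B \<subseteq> U" using B(1) assms(2) by (rule vec.span_minimal)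
  then have "U = vec.span B" using B(3) by (rule subset_antisym[rotated])
  also have "\<dots> = range (\<lambda>u. \<Sum>v\<in>B. u v *s v)" using vec.span_finite[OF fB] .
  also have "\<dots> \<subseteq> (\<lambda>u. \<Sum>v\<in>B. u v *s v) ` (PiE B (\<lambda>_. UNIV))"
  proof
    fix z assume "z \<in> range (\<lambda>u. \<Sum>v\<in>B. u v *s v)"
    then obtain u where z: "z = (\<Sum>v\<in>B. u v *s v)" by blast
    have "z = (\<Sum>v\<in>B. restrict u B v *s v)" unfolding z by (rule sum.cong) auto
    moreover have "restrict u B \<in> PiE B (\<lambda>_. UNIV)" by auto
    ultimately show "z \<in> (\<lambda>u. \<Sum>v\<in>B. u v *s v) ` (PiE B (\<lambda>_. UNIV))" by blast
  qed
  finally have sub: "U \<subseteq> (\<lambda>u. \<Sum>v\<in>B. u v *s v) ` (PiE B (\<lambda>_. UNIV))" .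
  have "card U \<le> card ((\<lambda>u. \<Sum>v\<in>B. u v *s v) ` (PiE B (\<lambda>_. (UNIV::'a set))))"
    by (rule card_mono[OF _ sub]) (simp add: finite_PiE fB fa)
  also have "\<dots> \<le> card (PiE B (\<lambda>_. (UNIV::'a set)))"
    by (rule card_image_le) (simp add: finite_PiE fB fa)
  also have "\<dots> = CARD('a) ^ card B" using card_PiE[OF fB, of "\<lambda>_. UNIV"] by simp
  finally show ?thesis using B(4) by simp
qed

lemma dotp_zero[simp]: "dotp f 0 = 0"
  by (simp add: dotp_def)

lemma dotp_axis: "dotp f (axis j 1) = f $ j"
  by (simp add: dotp_def axis_def if_distrib sum.If_cases cong del: if_weak_cong)

lemma ker_subspace: "vec.subspace {z. dotp f z = 0}"
  by (rule vec.subspaceI) (auto simp: dotp_add dotp_scale)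

lemma ker_proper: "f \<noteq> 0 \<Longrightarrow> {z. dotp f z = 0} \<noteq> UNIV"
proof
  assume "f \<noteq> 0" "{z. dotp f z = 0} = UNIV"
  then obtain j where "f $ j \<noteq> 0" by (auto simp: vec_eq_iff)
  moreover have "dotp f (axis j 1) = 0" using \<open>{z. dotp f z = 0} = UNIV\<close> by blast
  ultimately show False by (simp add: dotp_axis)
qed

lemma infinite_case:
  fixes Es :: "nat \<Rightarrow> ('a::field^'n) set" and H :: "'a^'n \<Rightarrow> ('a^'n) set"
  assumes inf: "infinite (UNIV::'a set)"
    and Es: "\<forall>i\<in>{1..CARD('n)}. vec.subspace (Es i) \<and> Es i \<noteq> UNIV"
    and S: "S = - (\<Union>i\<in>{1..CARD('n)}. Es i)"
    and H: "\<forall>x\<in>S. vec.subspace (H x) \<and> H x \<noteq> UNIV \<and> x \<in> H x"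
    and pair: "\<forall>x\<in>S. \<forall>y\<in>S. (\<forall>c. y \<noteq> c *s x) \<longrightarrow> y \<in> H x \<or> x \<in> H y"
  shows False
proof -
  have avoidX: "\<exists>w. w \<in> S \<and> (\<forall>x\<in>X. w \<notin> H x)" if X: "finite X" "X \<subseteq> S" for X
  proof -
    define F where "F = Es ` {1..CARD('n)} \<union> H ` X"
    have fF: "finite F" unfolding F_def using X by simp
    have pF: "\<forall>U\<in>F. vec.subspace U \<and> U \<noteq> UNIV" unfolding F_def using Es H X by blast
    obtain w where w: "\<forall>U\<in>F. w \<notin> U" using avoid_subspaces[OF inf fF pF] by (elim exE)
    have "w \<in> S" unfolding S using w unfolding F_def by blast
    moreover have "\<forall>x\<in>X. w \<notin> H x" using w unfolding F_def by blast
    ultimately show ?thesis by blast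
  qed
  have step: "1 \<le> k \<longrightarrow> k \<le> CARD('n) \<longrightarrow> (\<exists>X\<subseteq>S. vec.independent X \<and> card X = k \<and> (\<exists>z\<in>X. X \<subseteq> H z))" for k
  proof (induction k)
    case 0
    then show ?case by simp
  next
    case (Suc k)
    show ?case
    proof (intro impI)
      assume k: "1 \<le> Suc k" "Suc k \<le> CARD('n)"
      show "\<exists>X\<subseteq>S. vec.independent X \<and> card X = Suc k \<and> (\<exists>z\<in>X. X \<subseteq> H z)"
      proof (cases "k = 0")
        case True
        obtain w where w: "w \<in> S" using avoidX[of "{}"] by auto
        have "0 \<notin> S" using Es S k by (auto intro!: vec.subspace_0 bexI[of _ 1])
        then have "w \<noteq> 0" using w by blast
        then have "vec.independent {w}" by (simp add: vec.independent_insert)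
        moreover have "{w} \<subseteq> H w" using H w by blast
        ultimately show ?thesis using w True by (intro exI[of _ "{w}"]) auto
      next
        case False
        then obtain X z where X: "X \<subseteq> S" "vec.independent X" "card X = k"
          and z: "z \<in> X" "X \<subseteq> H z"
          using Suc.IH k by force
        have fX: "finite X" using X(2) vec.finiteI_independent by blast
        obtain w where w: "w \<in> S" "\<forall>x\<in>X. w \<notin> H x" using avoidX[OF fX X(1)] by blast
        have XHw: "X \<subseteq> H w"
        proof
          fix x assume x: "x \<in> X"
          then have xS: "x \<in> S" using X by blast
          have wx: "w \<notin> H x" using w x by blast
          have "\<forall>c. w \<noteq> c *s x"
          proof
            fix c
            have "c *s x \<in> H x" using H xS vec.subspace_scale by blast
            then show "w \<noteq> c *s x" using wx by blast
          qed
          then show "x \<in> H w" using pair xS w(1) wx by blast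
        qed
        have wHw: "w \<in> H w" using H w by blast
        have spX: "vec.span X \<subseteq> H z" using z(2) H X z(1) vec.span_minimal by blast
        have wsp: "w \<notin> vec.span X" using spX w z by blast
        then have wX: "w \<notin> X" using vec.span_base by blast
        have "vec.independent (insert w X)" using vec.independent_insertI[OF wsp X(2)] .
        moreover have "card (insert w X) = Suc k" using fX wX X(3) by simp
        moreover have "insert w X \<subseteq> S" using w X by blast
        moreover have "insert w X \<subseteq> H w" using XHw wHw by blast
        ultimately show ?thesis by blast
      qed
    qed
  qed
  have n1: "1 \<le> CARD('n)" by (simp add: Suc_leI)
  obtain X z where X: "X \<subseteq> S" "vec.independent X" "card X = CARD('n)"
    and z: "z \<in> X" "X \<subseteq> H z"
    using step[of "CARD('n)"] n1 by force
  have "vec.dim (vec.span X) = CARD('n)" using vec.dim_span_eq_card_independent[OF X(2)] X(3) by simp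
  then have "vec.dim X = card (cart_basis :: ('a^'n) set)" by (simp add: vec.dim_span card_cart_basis)
  then have "vec.span X = UNIV" using vec.dim_eq_full unfolding vec.dimension_def by blast
  moreover have "vec.span X \<subseteq> H z" using z(2) H X z(1) vec.span_minimal by blast
  ultimately show False using H X z by blast
qed

lemma count_lemma:
  fixes S :: "('a::field^'n) set" and H :: "'a^'n \<Rightarrow> ('a^'n) set"
  assumes fa: "finite (UNIV::'a set)"
    and S0: "0 \<notin> S" and Ssc: "\<forall>x\<in>S. \<forall>c. c \<noteq> 0 \<longrightarrow> c *s x \<in> S"
    and H: "\<forall>x\<in>S. vec.subspace (H x) \<and> x \<in> H x"
    and pair: "\<forall>x\<in>S. \<forall>y\<in>S. (\<forall>c. y \<noteq> c *s x) \<longrightarrow> y \<in> H x \<or> x \<in> H y"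
  shows "int (card S) * int (card S) \<le> (\<Sum>x\<in>S. 2 * int (card (S \<inter> H x)) - (int CARD('a) - 1))"
proof -
  have fV: "finite (UNIV :: ('a^'n) set)"
  proof -
    have "CARD('a^'n) = CARD('a) ^ CARD('n)" by simp
    moreover have "CARD('a) > 0" using fa by (simp add: finite_UNIV_card_ge_0)
    ultimately have "CARD('a^'n) > 0" by simp
    then show ?thesis using card.infinite by fastforce
  qed
  have finA: "finite (A :: ('a^'n) set)" for A by (rule finite_subset[OF subset_UNIV fV])
  have fS: "finite S" by (rule finA)
  define L where "L x = (\<lambda>c. c *s x) ` (UNIV - {0::'a})" for x :: "'a^'n"
  have Lsub: "L x \<subseteq> S \<inter> H x" if x: "x \<in> S" for x
    unfolding L_def using Ssc x H vec.subspace_scale by blast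
  have cardL: "card (L x) = CARD('a) - 1" if x: "x \<in> S" for x
  proof -
    have x0: "x \<noteq> 0" using x S0 by blast
    have "inj_on (\<lambda>c. c *s x) (UNIV - {0::'a})"
      by (rule inj_onI) (use x0 in simp)
    then have "card (L x) = card (UNIV - {0::'a})" unfolding L_def by (rule card_image)
    also have "\<dots> = CARD('a) - 1" using fa by (simp add: card_Diff_singleton)
    finally show ?thesis .
  qed
  define D where "D = Sigma S L"
  define P where "P = Sigma S (\<lambda>x. S \<inter> H x - L x)"
  have cover: "S \<times> S \<subseteq> D \<union> P \<union> prod.swap ` P"
  proof
    fix p assume p: "p \<in> S \<times> S"
    obtain x y where xy: "p = (x, y)" by (cases p)
    have x: "x \<in> S" and y: "y \<in> S" using p xy by auto
    show "p \<in> D \<union> P \<union> prod.swap ` P"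
    proof (cases "y \<in> L x")
      case True
      then show ?thesis using x xy unfolding D_def by blast
    next
      case False
      have nc: "\<forall>c. y \<noteq> c *s x"
      proof
        fix c
        show "y \<noteq> c *s x"
        proof
          assume yc: "y = c *s x"
          show False
          proof (cases "c = 0")
            case True then show False using yc y S0 by simp
          next
            case False then have "y \<in> L x" unfolding L_def using yc by blast
            then show False using \<open>y \<notin> L x\<close> by blast
          qed
        qed
      qed
      then have "y \<in> H x \<or> x \<in> H y" using pair x y by blast
      then show ?thesis
      proof
        assume "y \<in> H x"
        then have "(x, y) \<in> P" unfolding P_def using x y False by blast
        then show ?thesis using xy by blast
      next
        assume xH: "x \<in> H y"
        have "x \<notin> L y"
        proof
          assume "x \<in> L y"
          then obtain c where c: "c \<noteq> 0" "x = c *s y" unfolding L_def by blast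
          then have "inverse c *s x = y" by (simp add: vector_smult_assoc)
          then have "y \<in> L x" unfolding L_def using c by (metis DiffI UNIV_I image_eqI inverse_nonzero_iff_nonzero singletonD)
          then show False using False by blast
        qed
        then have "(y, x) \<in> P" unfolding P_def using x y xH by blast
        then have "prod.swap (y, x) \<in> prod.swap ` P" by (rule imageI)
        then show ?thesis using xy by simp
      qed
    qed
  qed
  have fD: "finite D" unfolding D_def using fS finA by (intro finite_SigmaI) auto
  have fP: "finite P" unfolding P_def using fS finA by (intro finite_SigmaI) auto
  have "card (S \<times> S) \<le> card (D \<union> P \<union> prod.swap ` P)"
    using cover fD fP by (intro card_mono) auto
  also have "\<dots> \<le> card D + card P + card (prod.swap ` P)"
    by (meson card_Un_le le_trans add_le_mono1)
  also have "\<dots> \<le> card D + card P + card P"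
    using card_image_le[OF fP, of prod.swap] by linarith
  finally have c1: "card S * card S \<le> card D + 2 * card P" by (simp add: card_cartesian_product)
  have cD: "card D = (\<Sum>x\<in>S. card (L x))"
    unfolding D_def using fS finA by (intro card_SigmaI) auto
  have cP: "card P = (\<Sum>x\<in>S. card (S \<inter> H x) - card (L x))"
  proof -
    have "card P = (\<Sum>x\<in>S. card (S \<inter> H x - L x))"
      unfolding P_def using fS finA by (intro card_SigmaI) auto
    also have "\<dots> = (\<Sum>x\<in>S. card (S \<inter> H x) - card (L x))"
    proof (rule sum.cong[OF refl])
      fix x assume "x \<in> S"
      then show "card (S \<inter> H x - L x) = card (S \<inter> H x) - card (L x)"
        using Lsub finA by (intro card_Diff_subset) auto
    qed
    finally show ?thesis .
  qed
  have le: "card (L x) \<le> card (S \<inter> H x)" if "x \<in> S" for x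
    using Lsub[OF that] fS by (intro card_mono) auto
  have c1': "int (card S) * int (card S) \<le> int (card D) + 2 * int (card P)"
  proof -
    have "int (card S * card S) \<le> int (card D + 2 * card P)" using c1 by (simp only: of_nat_le_iff)
    then show ?thesis by simp
  qed
  have q1: "CARD('a) \<ge> 1" using fa by (simp add: Suc_leI finite_UNIV_card_ge_0)
  have iD: "int (card D) = (\<Sum>x\<in>S. int CARD('a) - 1)"
  proof -
    have "int (card D) = (\<Sum>x\<in>S. int (card (L x)))" unfolding cD by simp
    also have "\<dots> = (\<Sum>x\<in>S. int CARD('a) - 1)"
    proof (rule sum.cong[OF refl])
      fix x assume x: "x \<in> S"
      show "int (card (L x)) = int CARD('a) - 1" using cardL[OF x] q1 by simp
    qed
    finally show ?thesis .
  qed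
  have iP: "int (card P) = (\<Sum>x\<in>S. int (card (S \<inter> H x)) - (int CARD('a) - 1))"
  proof -
    have "int (card P) = (\<Sum>x\<in>S. int (card (S \<inter> H x) - card (L x)))" unfolding cP by simp
    also have "\<dots> = (\<Sum>x\<in>S. int (card (S \<inter> H x)) - (int CARD('a) - 1))"
    proof (rule sum.cong[OF refl])
      fix x assume x: "x \<in> S"
      show "int (card (S \<inter> H x) - card (L x)) = int (card (S \<inter> H x)) - (int CARD('a) - 1)"
        using cardL[OF x] le[OF x] q1 by (simp add: of_nat_diff)
    qed
    finally show ?thesis .
  qed
  have "(\<Sum>x\<in>S. int CARD('a) - 1) + 2 * (\<Sum>x\<in>S. int (card (S \<inter> H x)) - (int CARD('a) - 1))
      = (\<Sum>x\<in>S. 2 * int (card (S \<inter> H x)) - (int CARD('a) - 1))"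
  proof -
    have "(\<Sum>x\<in>S. int CARD('a) - 1) + 2 * (\<Sum>x\<in>S. int (card (S \<inter> H x)) - (int CARD('a) - 1))
      = (\<Sum>x\<in>S. (int CARD('a) - 1) + 2 * (int (card (S \<inter> H x)) - (int CARD('a) - 1)))"
      by (simp only: sum.distrib sum_distrib_left)
    also have "\<dots> = (\<Sum>x\<in>S. 2 * int (card (S \<inter> H x)) - (int CARD('a) - 1))"
      by (rule sum.cong[OF refl]) (simp add: algebra_simps)
    finally show ?thesis .
  qed
  then show ?thesis using c1' iD iP by linarith
qed

lemma three_elems:
  fixes E :: "('a::field^'n) set"
  assumes sub: "vec.subspace E" and d: "vec.dim E = 2"
  shows "\<exists>v. v \<noteq> 0 \<and> v \<in> E \<and> dotp f v = 0"
proof -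
  obtain B where B: "B \<subseteq> E" "vec.independent B" "E \<subseteq> vec.span B" "card B = vec.dim E"
    using vec.basis_exists[of E] by blast
  then obtain b1 b2 where b: "B = {b1, b2}" "b1 \<noteq> b2" using d by (auto simp: card_2_iff)
  have b10: "b1 \<noteq> 0" using B(2) b vec.dependent_zero by blast
  have "vec.independent (insert b2 {b1})" using B(2) b by (simp add: insert_commute)
  then have "b2 \<notin> vec.span {b1}" using b(2) by (simp add: vec.independent_insert)
  then have nc: "\<forall>c. b2 \<noteq> c *s b1" by (auto simp: vec.span_singleton)
  have bE: "b1 \<in> E" "b2 \<in> E" using B b by auto
  show ?thesis
  proof (cases "dotp f b1 = 0")
    case True
    then show ?thesis using b10 bE by blast
  next
    case False
    define v where "v = dotp f b2 *s b1 - dotp f b1 *s b2"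
    have "v \<noteq> 0" unfolding v_def by (rule indep_comb2[OF nc False])
    moreover have "v \<in> E" unfolding v_def using bE sub
      by (intro vec.subspace_diff vec.subspace_scale) auto
    moreover have "dotp f v = 0" unfolding v_def by (simp add: dotp_diff dotp_scale mult.commute)
    ultimately show ?thesis by blast
  qed
qed

lemma sum_pow_bound:
  fixes q :: nat
  assumes q: "q \<ge> 3" and n: "n \<ge> 4"
  shows "(\<Sum>i\<in>{1..n}. q ^ ((i + 1) div 2)) \<le> q ^ (n - 1)"
  using n
proof (induction n rule: nat_induct_at_least)
  case base
  have "(\<Sum>i\<in>{1..4::nat}. q ^ ((i + 1) div 2)) = 2 * q + 2 * q ^ 2"
  proof -
    have "{1..4::nat} = {1,2,3,4}" by auto
    then show ?thesis by (simp add: power2_eq_square)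
  qed
  also have "\<dots> \<le> q ^ 3"
  proof -
    have "q * q \<ge> 3 * q" using q by simp
    then have "q * q * q \<ge> 3 * q * q" by simp
    moreover have "q * q \<ge> 2 * q + 1" using \<open>q * q \<ge> 3 * q\<close> q by linarith
    moreover have "3 * q * q = 2 * (q * q) + q * q" by simp
    ultimately have "q * q * q \<ge> 2 * q + 2 * (q * q)" by linarith
    then show ?thesis by (simp add: power2_eq_square power3_eq_cube mult_ac)
  qed
  finally show ?case by simp
next
  case (Suc n)
  have "(\<Sum>i\<in>{1..Suc n}. q ^ ((i + 1) div 2)) = (\<Sum>i\<in>{1..n}. q ^ ((i + 1) div 2)) + q ^ ((n + 2) div 2)"
    by simp
  also have "\<dots> \<le> q ^ (n - 1) + q ^ (n - 1)"
  proof -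
    have "(n + 2) div 2 \<le> n - 1" using Suc.hyps by linarith
    then have "q ^ ((n + 2) div 2) \<le> q ^ (n - 1)" using q by (intro power_increasing) auto
    then show ?thesis using Suc.IH by linarith
  qed
  also have "\<dots> \<le> q * q ^ (n - 1)"
  proof -
    have "2 * q ^ (n - 1) \<le> q * q ^ (n - 1)" using q by (intro mult_right_mono) auto
    moreover have "q ^ (n - 1) + q ^ (n - 1) = 2 * q ^ (n - 1)" by simp
    ultimately show ?thesis by linarith
  qed
  also have "\<dots> = q ^ (Suc n - 1)" using Suc.hyps by (cases n) auto
  finally show ?case .
qed

lemma arith3:
  fixes q :: int
  assumes "q \<ge> 3"
  shows "q^3 - 3 * q^2 - q + 7 > 0"
proof (cases "q = 3")
  case True then show ?thesis by simp
next
  case False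
  then have q4: "q \<ge> 4" using assms by simp
  have "q^2 * (q - 3) \<ge> q^2 * 1" using q4 by (intro mult_left_mono) auto
  moreover have "q^2 \<ge> q" using q4 by (simp add: power2_eq_square)
  ultimately have "q^2 * (q - 3) \<ge> q" by linarith
  then show ?thesis by (simp add: power2_eq_square power3_eq_cube algebra_simps)
qed

lemma arith2:
  fixes q :: int
  assumes "q \<ge> 3"
  shows "q^2 - 3 * q + 2 > 0"
proof -
  have "(q - 1) * (q - 2) > 0" using assms by (intro mult_pos_pos) auto
  then show ?thesis by (simp add: power2_eq_square algebra_simps)
qed


lemma lin3:
  fixes a b c Qi :: int
  assumes "Qi = b" "0 < c - 3 * b - a + 7"
  shows "2 * (Qi - 3) - (a - 1) < c - 1 - (2 * a + b) + 3"
  using assms by arith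

lemma two_ne_one: "(2::'a::field) \<noteq> 1"
proof
  assume h: "(2::'a) = 1"
  have "(1::'a) + 1 = 1" using h by (simp only: one_add_one)
  then have "(1::'a) = 0" by (metis add_cancel_right_right)
  then show False by simp
qed

lemma finite_case:
  fixes Es :: "nat \<Rightarrow> ('a::field^'n) set" and phi :: "'a^'n \<Rightarrow> 'a^'n"
    and H :: "'a^'n \<Rightarrow> ('a^'n) set"
  assumes fa: "finite (UNIV::'a set)" and char: "(2::'a) \<noteq> 0" and n2: "CARD('n) \<ge> 2"
    and Es: "\<forall>i\<in>{1..CARD('n)}. vec.subspace (Es i) \<and> vec.dim (Es i) = (i+1) div 2"
    and S: "S = - (\<Union>i\<in>{1..CARD('n)}. Es i)"
    and Hdef: "H = (\<lambda>x. {z. dotp (phi x) z = 0})"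
    and phi: "\<forall>x\<in>S. phi x \<noteq> 0 \<and> dotp (phi x) x = 0"
    and pair: "\<forall>x\<in>S. \<forall>y\<in>S. (\<forall>c. y \<noteq> c *s x) \<longrightarrow> y \<in> H x \<or> x \<in> H y"
  shows False
proof -
  define q where "q = CARD('a)"
  define n where "n = CARD('n)"
  define Q where "Q = q ^ (n - 1)"
  define UE where "UE = (\<Union>i\<in>{1..n}. Es i)"
  define h :: int where "h = (if n = 3 then 3 else 1)"
  have n2': "n \<ge> 2" using n2 n_def by simp
  have q3: "q \<ge> 3"
  proof -
    have d01: "(0::'a) \<noteq> 1" by simp
    have d02: "(0::'a) \<noteq> 2" using char by metis
    have d12: "(1::'a) \<noteq> 2" using two_ne_one by metis
    have "card {0::'a, 1, 2} = 3" using d01 d02 d12 by simp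
    moreover have "card {0::'a, 1, 2} \<le> card (UNIV::'a set)" using fa by (intro card_mono) auto
    ultimately show ?thesis unfolding q_def by simp
  qed
  have fV: "finite (UNIV :: ('a^'n) set)"
  proof -
    have "CARD('a^'n) = CARD('a) ^ CARD('n)" by simp
    moreover have "CARD('a) > 0" using fa by (simp add: finite_UNIV_card_ge_0)
    ultimately have "CARD('a^'n) > 0" by simp
    then show ?thesis using card.infinite by fastforce
  qed
  have finA: "finite (A :: ('a^'n) set)" for A by (rule finite_subset[OF subset_UNIV fV])
  have one_in: "1 \<in> {1..n}" using n2' by simp
  have Esub: "vec.subspace (Es i)" if "i \<in> {1..n}" for i using Es that by (simp add: n_def)
  have E0: "0 \<in> Es i" if "i \<in> {1..n}" for i using Esub[OF that] by (rule vec.subspace_0)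
  have S': "S = UNIV - UE" using S by (simp add: UE_def n_def Compl_eq_Diff_UNIV del: Diff_UNIV)
  have "0 \<in> UE" unfolding UE_def using E0[OF one_in] one_in by (rule UN_I[rotated])
  then have S0: "0 \<notin> S" using S' by simp
  have Ssc: "\<forall>x\<in>S. \<forall>c. c \<noteq> 0 \<longrightarrow> c *s x \<in> S"
  proof (intro ballI allI impI)
    fix x c assume x: "x \<in> S" and c: "(c::'a) \<noteq> 0"
    show "c *s x \<in> S"
    proof (rule ccontr)
      assume "c *s x \<notin> S"
      then obtain i where i: "i \<in> {1..n}" "c *s x \<in> Es i" unfolding S' UE_def by blast
      then have "inverse c *s (c *s x) \<in> Es i" using Es n_def vec.subspace_scale by blast
      then have "x \<in> Es i" using c by (simp add: vector_smult_assoc)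
      then show False using x i unfolding S' UE_def by blast
    qed
  qed
  have Hf: "\<forall>x\<in>S. vec.subspace (H x) \<and> x \<in> H x" using phi unfolding Hdef by (simp add: ker_subspace)
  have CL: "int (card S) * int (card S) \<le> (\<Sum>x\<in>S. 2 * int (card (S \<inter> H x)) - (int q - 1))"
    using count_lemma[OF fa S0 Ssc Hf pair] unfolding q_def .
  have HB: "int (card (S \<inter> H x)) \<le> int Q - h" if x: "x \<in> S" for x
  proof -
    have sub: "vec.subspace (H x)" using Hf x by blast
    have Hprop: "H x \<noteq> UNIV" using phi x ker_proper unfolding Hdef by blast
    have "vec.dim (H x) \<noteq> n"
    proof
      assume "vec.dim (H x) = n"
      then have "vec.dim (H x) = card (cart_basis :: ('a^'n) set)" by (simp add: n_def card_cart_basis)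
      then have "vec.span (H x) = UNIV" using vec.dim_eq_full unfolding vec.dimension_def by blast
      moreover have "vec.span (H x) = H x" using sub by (simp add: vec.span_eq_iff)
      ultimately show False using Hprop by simp
    qed
    moreover have "vec.dim (H x) \<le> n" unfolding n_def by (rule dim_subset_UNIV_cart_gen)
    ultimately have "vec.dim (H x) \<le> n - 1" by linarith
    then have "q ^ vec.dim (H x) \<le> Q" unfolding Q_def using q3 by (intro power_increasing) auto
    then have cH: "card (H x) \<le> Q" using card_subspace_le[OF fa sub] unfolding q_def by linarith
    have eqH: "H x = (S \<inter> H x) \<union> (H x \<inter> UE)" unfolding S' by blast
    have dj: "(S \<inter> H x) \<inter> (H x \<inter> UE) = {}" unfolding S' by blast
    have cU: "card (H x) = card (S \<inter> H x) + card (H x \<inter> UE)"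
      by (subst eqH) (rule card_Un_disjoint[OF finA finA dj])
    have "int (card (H x \<inter> UE)) \<ge> h"
    proof (cases "n = 3")
      case True
      then have three: "3 \<in> {1..n}" by simp
      then have "vec.subspace (Es 3)" "vec.dim (Es 3) = 2" using Es n_def by auto
      from three_elems[OF this, of "phi x"] obtain v where v: "v \<noteq> 0" "v \<in> Es 3" "dotp (phi x) v = 0"
        by blast
      have sub3: "vec.subspace (Es 3)" using Es n_def three by auto
      have "2 *s v \<in> Es 3" using v(2) sub3 vec.subspace_scale by blast
      moreover have "dotp (phi x) (2 *s v) = 0" using v(3) by (simp add: dotp_scale)
      moreover have "0 \<in> Es 3" using E0[OF three] .
      ultimately have "{0, v, 2 *s v} \<subseteq> H x \<inter> UE" using v three unfolding Hdef UE_def by auto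
      moreover have "card {0, v, 2 *s v} = 3"
      proof -
        have a1: "2 *s v \<noteq> 0" using v(1) char by simp
        have a2: "2 *s v \<noteq> v"
        proof
          assume "2 *s v = v"
          then have "2 *s v = 1 *s v" by simp
          then have "(2::'a) = 1" using v(1) vec.scale_cancel_right by metis
          then show False using two_ne_one by metis
        qed
        show ?thesis using a1 a2 v(1) by auto
      qed
      ultimately have "card (H x \<inter> UE) \<ge> 3" using card_mono[OF finA] by metis
      then show ?thesis using True unfolding h_def by simp
    next
      case False
      have "0 \<in> H x \<inter> UE" using E0[OF one_in] sub vec.subspace_0 unfolding UE_def using one_in by blast
      then have "card (H x \<inter> UE) \<noteq> 0" using finA[of "H x \<inter> UE"] by auto
      then have "card (H x \<inter> UE) \<ge> 1" by simp
      then show ?thesis using False unfolding h_def by simp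
    qed
    then show ?thesis using cU cH by linarith
  qed
  define N where "N = int (card S)"
  define R where "R = 2 * (int Q - h) - (int q - 1)"
  have "(\<Sum>x\<in>S. 2 * int (card (S \<inter> H x)) - (int q - 1)) \<le> (\<Sum>x\<in>S. R)"
    unfolding R_def
  proof (rule sum_mono)
    fix x assume "x \<in> S"
    from HB[OF this] show "2 * int (card (S \<inter> H x)) - (int q - 1) \<le> 2 * (int Q - h) - (int q - 1)"
      by simp
  qed
  also have "\<dots> = N * R" unfolding N_def by simp
  finally have NN: "N * N \<le> N * R" using CL unfolding N_def by linarith
  have cS: "int (card S) = int (q ^ n) - int (card UE)"
  proof -
    have "card S = card (UNIV :: ('a^'n) set) - card UE" unfolding S' using finA by (intro card_Diff_subset) auto
    moreover have "card (UNIV :: ('a^'n) set) = q ^ n" unfolding q_def n_def by simp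
    moreover have "card UE \<le> card (UNIV :: ('a^'n) set)" using fV by (intro card_mono) auto
    ultimately show ?thesis by (simp add: of_nat_diff)
  qed
  define A where "A = (\<Sum>i\<in>{1..n}. q ^ ((i + 1) div 2))"
  have cUE: "int (card UE) \<le> 1 + int A - int n"
  proof -
    define X where "X = (\<Union>i\<in>{1..n}. Es i - {0})"
    have "UE \<subseteq> insert 0 X" unfolding UE_def X_def by blast
    then have "card UE \<le> card (insert 0 X)" using finA by (intro card_mono) auto
    also have "\<dots> \<le> Suc (card X)" using card_insert_if[OF finA[of X], of 0] by simp
    also have "card X \<le> (\<Sum>i\<in>{1..n}. card (Es i - {0}))" unfolding X_def by (rule card_UN_le) simp
    finally have c1: "card UE \<le> Suc (\<Sum>i\<in>{1..n}. card (Es i - {0}))" by simp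
    have "int (\<Sum>i\<in>{1..n}. card (Es i - {0})) = (\<Sum>i\<in>{1..n}. int (card (Es i)) - 1)"
      unfolding of_nat_sum
    proof (rule sum.cong[OF refl])
      fix i assume i: "i \<in> {1..n}"
      have "card (Es i) \<noteq> 0" using E0[OF i] finA[of "Es i"] by auto
      then have "card (Es i) \<ge> 1" by simp
      then show "int (card (Es i - {0})) = int (card (Es i)) - 1" using E0[OF i] finA by (simp add: card_Diff_singleton of_nat_diff)
    qed
    also have "\<dots> \<le> (\<Sum>i\<in>{1..n}. int (q ^ ((i + 1) div 2)) - 1)"
    proof (rule sum_mono)
      fix i assume i: "i \<in> {1..n}"
      have "card (Es i) \<le> q ^ vec.dim (Es i)" using card_subspace_le[OF fa Esub[OF i]] unfolding q_def .
      moreover have "vec.dim (Es i) = (i + 1) div 2" using Es i by (simp add: n_def)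
      ultimately have "card (Es i) \<le> q ^ ((i + 1) div 2)" by simp
      then have "int (card (Es i)) \<le> int (q ^ ((i + 1) div 2))" by (simp only: of_nat_le_iff)
      then show "int (card (Es i)) - 1 \<le> int (q ^ ((i + 1) div 2)) - 1" by linarith
    qed
    also have "\<dots> = int A - int n" unfolding A_def by (simp add: sum_subtractf of_nat_sum)
    finally show ?thesis using c1 by linarith
  qed
  have LB: "N \<ge> int (q ^ n) - 1 - int A + int n" unfolding N_def using cS cUE by linarith
  have key: "int (q ^ n) - 1 - int A + int n > R \<and> R \<ge> 0"
  proof -
    have qi: "int q \<ge> 3" using q3 by simp
    consider "n = 2" | "n = 3" | "n \<ge> 4" using n2' by linarith
    then show ?thesis
    proof cases
      case 1
      have "{1..n} = {1, 2}" using 1 by auto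
      then have "A = q + q" unfolding A_def by simp
      moreover have "Q = q" unfolding Q_def using 1 by simp
      moreover have "q ^ n = q * q" using 1 by (simp add: power2_eq_square)
      ultimately show ?thesis using arith2[OF qi] 1 q3 unfolding R_def h_def
        by (simp add: power2_eq_square algebra_simps)
    next
      case 2
      have "{1..n} = {1, 2, 3}" using 2 by auto
      then have "A = q + q + q * q" unfolding A_def by (simp add: power2_eq_square)
      then have iA: "int A = 2 * int q + int q * int q" by simp
      have "Q = q * q" unfolding Q_def using 2 by (simp add: power2_eq_square)
      then have iQ: "int Q = int q * int q" by simp
      have "q ^ n = q * q * q" using 2 by (simp add: power3_eq_cube)
      then have iP: "int (q ^ n) = int q * int q * int q" by simp
      have qq: "int q * int q \<ge> 3 * int q" using qi by (intro mult_right_mono) auto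
      have a3: "int q * int q * int q - 3 * (int q * int q) - int q + 7 > 0"
        using arith3[OF qi] by (simp add: power2_eq_square power3_eq_cube)
      have hh: "h = 3" unfolding h_def using 2 by simp
      have e: "int (q ^ n) - 1 - int A + int n = int q * int q * int q - 1 - (2 * int q + int q * int q) + 3"
        using iA iP 2 by simp
      have g1: "2 * (int Q - 3) - (int q - 1) < int q * int q * int q - 1 - (2 * int q + int q * int q) + 3"
        using lin3[OF iQ a3] .
      have g2: "0 \<le> 2 * (int Q - 3) - (int q - 1)" using iQ qq qi by arith
      show ?thesis unfolding R_def hh e using g1 g2 by blast
    next
      case 3
      have "A \<le> Q" unfolding A_def Q_def using sum_pow_bound[OF q3 3] .
      moreover have "q ^ n = q * Q" unfolding Q_def using 3 by (cases n) auto
      moreover have "q * Q \<ge> 3 * Q" using q3 by simp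
      moreover have "Q \<ge> q"
      proof -
        have "q ^ 1 \<le> q ^ (n - 1)" using 3 q3 by (intro power_increasing) auto
        then show ?thesis unfolding Q_def by simp
      qed
      ultimately have iA: "int A \<le> int Q" and iP: "int (q ^ n) = int q * int Q"
        and iQq: "int Q \<ge> int q" by simp_all
      have m: "int q * int Q \<ge> 3 * int Q" using qi by (intro mult_right_mono) auto
      have hh: "h = 1" unfolding h_def using 3 by simp
      have g1: "int (q ^ n) - 1 - int A + int n > R" unfolding R_def hh iP using iA m iQq qi by arith
      have g2: "R \<ge> 0" unfolding R_def hh using iQq qi by arith
      show ?thesis using g1 g2 by blast
    qed
  qed
  have Npos: "N > 0" using LB key by linarith
  have "N \<le> R" using NN Npos by (simp add: mult_le_cancel_left_pos)
  then show False using LB key by linarith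
qed

theorem mainTheorem9:
  fixes V :: "('a::field^'n^'n) set"
    and Es :: "nat \<Rightarrow> ('a^'n) set"
  assumes char: "(2::'a) \<noteq> 0"
    and n2: "CARD('n) \<ge> 2"
    and V: "linear_subspace_mat V"
    and two_eig: "\<forall>u\<in>V. finite {c. is_eigenvalue u c} \<and> card {c. is_eigenvalue u c} \<le> 2"
    and n_eq_2: "CARD('n) = 2 \<Longrightarrow>
       (\<forall>u\<in>V. finite {c. c \<noteq> 0 \<and> is_eigenvalue u c} \<and> card {c. c \<noteq> 0 \<and> is_eigenvalue u c} \<le> 1)"
    and cx: "two_complex Es"
  shows "\<exists>x. V_good V x \<and> x \<notin> (\<Union>i\<in>{1..CARD('n)}. Es i)"
proof (rule ccontr)
  assume H0: "\<not> (\<exists>x. V_good V x \<and> x \<notin> (\<Union>i\<in>{1..CARD('n)}. Es i))"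
  define S where "S = - (\<Union>i\<in>{1..CARD('n)}. Es i)"
  have Es: "\<forall>i\<in>{1..CARD('n)}. vec.subspace (Es i) \<and> vec.dim (Es i) = (i+1) div 2"
    using cx unfolding two_complex_def by blast
  have Esp: "\<forall>i\<in>{1..CARD('n)}. vec.subspace (Es i) \<and> Es i \<noteq> UNIV"
  proof
    fix i assume i: "i \<in> {1..CARD('n)}"
    have sub: "vec.subspace (Es i)" and d: "vec.dim (Es i) = (i+1) div 2" using Es i by auto
    have "Es i \<noteq> UNIV"
    proof
      assume "Es i = UNIV"
      then have "vec.dim (Es i) = CARD('n)" by (simp add: card_cart_basis)
      with d have "(i + 1) div 2 = CARD('n)" by simp
      moreover have "i \<le> CARD('n)" using i by simp
      ultimately show False using n2 by arith
    qed
    then show "vec.subspace (Es i) \<and> Es i \<noteq> UNIV" using sub by blast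
  qed
  have one_in: "1 \<in> {1..CARD('n)}" using n2 by simp
  have "0 \<in> Es 1" using Es one_in vec.subspace_0 by blast
  then have S0: "0 \<notin> S" unfolding S_def using one_in by blast
  have bad: "\<forall>x\<in>S. \<exists>f. outer x f \<in> V \<and> dotp f x = 0 \<and> f \<noteq> 0"
  proof
    fix x assume x: "x \<in> S"
    then have x0: "x \<noteq> 0" using S0 by blast
    have "x \<notin> (\<Union>i\<in>{1..CARD('n)}. Es i)" using x unfolding S_def by simp
    then have "\<not> V_good V x" using H0 by blast
    then show "\<exists>f. outer x f \<in> V \<and> dotp f x = 0 \<and> f \<noteq> 0" using bad_decomp[OF x0] by blast
  qed
  obtain phi where phi: "\<forall>x\<in>S. outer x (phi x) \<in> V \<and> dotp (phi x) x = 0 \<and> phi x \<noteq> 0"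
    using bchoice[OF bad] by blast
  define H where "H = (\<lambda>x. {z. dotp (phi x) z = 0})"
  have pair: "\<forall>x\<in>S. \<forall>y\<in>S. (\<forall>c. y \<noteq> c *s x) \<longrightarrow> y \<in> H x \<or> x \<in> H y"
  proof (intro ballI impI)
    fix x y assume x: "x \<in> S" and y: "y \<in> S" and xy: "\<forall>c. y \<noteq> c *s x"
    have px: "outer x (phi x) \<in> V" "dotp (phi x) x = 0" using phi x by auto
    have py: "outer y (phi y) \<in> V" "dotp (phi y) y = 0" using phi y by auto
    have "dotp (phi x) y * dotp (phi y) x = 0"
      by (rule pair_lemma[OF char n2 V two_eig n_eq_2 px py xy])
    then show "y \<in> H x \<or> x \<in> H y" unfolding H_def by simp
  qed
  have phiF: "\<forall>x\<in>S. phi x \<noteq> 0 \<and> dotp (phi x) x = 0" using phi by blast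
  show False
  proof (cases "finite (UNIV :: 'a set)")
    case True
    show False by (rule finite_case[OF True char n2 Es S_def H_def phiF pair])
  next
    case False
    have Hf: "\<forall>x\<in>S. vec.subspace (H x) \<and> H x \<noteq> UNIV \<and> x \<in> H x"
      unfolding H_def using phiF ker_subspace ker_proper by blast
    show False by (rule infinite_case[OF False Esp S_def Hf pair])
  qed
qed

end
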